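(* Let $(f^*,g^* )$ be a stationary $\hat\beta$-discounted Nash equilibrium of a two-player discrete time stochastic game for some $\hat\beta\in[0,1)$, and suppose: (D1) $(f^*,g^* )$ is pure, i.e. for each $s\in S$ there are actions $a^1_s\in A^1(s)$, $a^2_s\in A^2(s)$ with $f^*(s,a^1_s)=1$, $g^*(s,a^2_s)=1$; (D2) $P(f^*,g^* )=I$, i.e. every state is absorbing under $(f^*,g^* )$; (D3) for all $s\in S$, $a^1\in A^1(s)$: $r^1(s,a^1,a^2_s)\ge\sum_{s'\in S}p(s'\mid s,a^1,a^2_s)\,r^1(s',a^1_{s'},a^2_{s'})$, and for all $s\in S$, $a^2\in A^2(s)$: $r^2(s,a^1_s,a^2)\ge\sum_{s'\in S}p(s'\mid s,a^1_s,a^2)\,r^2(s',a^1_{s'},a^2_{s'})$. Then $(f^*,g^* )$ is a Blackwell-Nash equilibrium.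
   Context: A two-player discrete time stochastic game consists of a finite state set $S$, finite nonempty action sets $A^1(s),A^2(s)$ for each $s\in S$, reward functions $r^i(s,a^1,a^2)$ for $i=1,2$, and transition probabilities $p(s'\mid s,a^1,a^2)$. A stationary strategy of player 1 is $f=(f(s))_{s\in S}$ with $f(s)$ a probability distribution on $A^1(s)$, $f(s,a^1)$ denoting the probability of $a^1$; similarly $g$ for player 2. For a stationary pair $(f,g)$ let $r^i(s,f,g)=\sum_{a^1,a^2}f(s,a^1)g(s,a^2)r^i(s,a^1,a^2)$ and $P(f,g)$ the $|S|\times|S|$ matrix with entries $P(f,g)_{ss'}=\sum_{a^1,a^2}f(s,a^1)g(s,a^2)p(s'\mid s,a^1,a^2)$. For $\beta\in[0,1)$ the $\beta$-discounted payoff vector of player $i$ is $v^i_\beta(f,g)=(I-\beta P(f,g))^{-1}r^i(f,g)$, with $s$-th component $v^i_\beta(s,f,g)$. A stationary pair $(f^*,g^* )$ is a $\beta$-discounted Nash equilibrium if for all $s\in S$, $v^1_\beta(s,f^*,g^* )\ge v^1_\beta(s,f,g^* )$ for all stationary $f$ and $v^2_\beta(s,f^*,g^* )\ge v^2_\beta(s,f^*,g)$ for all stationary $g$. A stationary pair is a Blackwell-Nash equilibrium (BNE) if there is $\beta_0\in[0,1)$ such that it is a $\beta$-discounted Nash equilibrium for every $\beta\in[\beta_0,1)$. *)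

theory Defs
  imports "HOL-Analysis.Analysis" "HOL-Probability.Probability_Mass_Function"
begin

text \<open>Admissible action sets
A1 s, A2 s; rewards r i s a1 a2; transition probabilities p s a1 a2 s' = p(s'|s,a1,a2).
A stationary strategy is a map from states to distributions (pmf) supported on
the admissible actions; f(s,a) is pmf (f s) a.\<close>

definition stochastic_game ::
  "('s::finite \<Rightarrow> 'a set) \<Rightarrow> ('s \<Rightarrow> 'b set) \<Rightarrow> ('s \<Rightarrow> 'a \<Rightarrow> 'b \<Rightarrow> 's \<Rightarrow> real) \<Rightarrow> bool" where
  "stochastic_game A1 A2 p \<longleftrightarrow>
     (\<forall>s. finite (A1 s) \<and> A1 s \<noteq> {} \<and> finite (A2 s) \<and> A2 s \<noteq> {}) \<and>
     (\<forall>s a1 a2 s'. a1 \<in> A1 s \<longrightarrow> a2 \<in> A2 s \<longrightarrow> p s a1 a2 s' \<ge> 0) \<and>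
     (\<forall>s a1 a2. a1 \<in> A1 s \<longrightarrow> a2 \<in> A2 s \<longrightarrow> (\<Sum>s'\<in>UNIV. p s a1 a2 s') = 1)"

definition stationary :: "('s \<Rightarrow> 'a set) \<Rightarrow> ('s \<Rightarrow> 'a pmf) \<Rightarrow> bool" where
  "stationary A f \<longleftrightarrow> (\<forall>s. set_pmf (f s) \<subseteq> A s)"

definition rew_vec ::
  "('s::finite \<Rightarrow> 'a set) \<Rightarrow> ('s \<Rightarrow> 'b set) \<Rightarrow> ('s \<Rightarrow> 'a \<Rightarrow> 'b \<Rightarrow> real)
   \<Rightarrow> ('s \<Rightarrow> 'a pmf) \<Rightarrow> ('s \<Rightarrow> 'b pmf) \<Rightarrow> real^'s" where
  "rew_vec A1 A2 r f g = (\<chi> s. \<Sum>a1\<in>A1 s. \<Sum>a2\<in>A2 s. pmf (f s) a1 * pmf (g s) a2 * r s a1 a2)"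

definition trans_mat ::
  "('s::finite \<Rightarrow> 'a set) \<Rightarrow> ('s \<Rightarrow> 'b set) \<Rightarrow> ('s \<Rightarrow> 'a \<Rightarrow> 'b \<Rightarrow> 's \<Rightarrow> real)
   \<Rightarrow> ('s \<Rightarrow> 'a pmf) \<Rightarrow> ('s \<Rightarrow> 'b pmf) \<Rightarrow> real^'s^'s" where
  "trans_mat A1 A2 p f g = (\<chi> s s'. \<Sum>a1\<in>A1 s. \<Sum>a2\<in>A2 s. pmf (f s) a1 * pmf (g s) a2 * p s a1 a2 s')"

definition disc_payoff ::
  "('s::finite \<Rightarrow> 'a set) \<Rightarrow> ('s \<Rightarrow> 'b set) \<Rightarrow> ('s \<Rightarrow> 'a \<Rightarrow> 'b \<Rightarrow> 's \<Rightarrow> real)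
   \<Rightarrow> ('s \<Rightarrow> 'a \<Rightarrow> 'b \<Rightarrow> real) \<Rightarrow> real \<Rightarrow> ('s \<Rightarrow> 'a pmf) \<Rightarrow> ('s \<Rightarrow> 'b pmf) \<Rightarrow> real^'s" where
  "disc_payoff A1 A2 p r \<beta> f g =
     matrix_inv (mat 1 - \<beta> *\<^sub>R trans_mat A1 A2 p f g) *v rew_vec A1 A2 r f g"

definition disc_nash ::
  "('s::finite \<Rightarrow> 'a set) \<Rightarrow> ('s \<Rightarrow> 'b set) \<Rightarrow> ('s \<Rightarrow> 'a \<Rightarrow> 'b \<Rightarrow> 's \<Rightarrow> real)
   \<Rightarrow> ('s \<Rightarrow> 'a \<Rightarrow> 'b \<Rightarrow> real) \<Rightarrow> ('s \<Rightarrow> 'a \<Rightarrow> 'b \<Rightarrow> real)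
   \<Rightarrow> real \<Rightarrow> ('s \<Rightarrow> 'a pmf) \<Rightarrow> ('s \<Rightarrow> 'b pmf) \<Rightarrow> bool" where
  "disc_nash A1 A2 p r1 r2 \<beta> f g \<longleftrightarrow>
     stationary A1 f \<and> stationary A2 g \<and>
     (\<forall>s. (\<forall>f'. stationary A1 f' \<longrightarrow>
               disc_payoff A1 A2 p r1 \<beta> f g $ s \<ge> disc_payoff A1 A2 p r1 \<beta> f' g $ s) \<and>
          (\<forall>g'. stationary A2 g' \<longrightarrow>
               disc_payoff A1 A2 p r2 \<beta> f g $ s \<ge> disc_payoff A1 A2 p r2 \<beta> f g' $ s))"

definition blackwell_nash ::
  "('s::finite \<Rightarrow> 'a set) \<Rightarrow> ('s \<Rightarrow> 'b set) \<Rightarrow> ('s \<Rightarrow> 'a \<Rightarrow> 'b \<Rightarrow> 's \<Rightarrow> real)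
   \<Rightarrow> ('s \<Rightarrow> 'a \<Rightarrow> 'b \<Rightarrow> real) \<Rightarrow> ('s \<Rightarrow> 'a \<Rightarrow> 'b \<Rightarrow> real)
   \<Rightarrow> ('s \<Rightarrow> 'a pmf) \<Rightarrow> ('s \<Rightarrow> 'b pmf) \<Rightarrow> bool" where
  "blackwell_nash A1 A2 p r1 r2 f g \<longleftrightarrow>
     (\<exists>\<beta>0. 0 \<le> \<beta>0 \<and> \<beta>0 < 1 \<and>
        (\<forall>\<beta>. \<beta>0 \<le> \<beta> \<and> \<beta> < 1 \<longrightarrow> disc_nash A1 A2 p r1 r2 \<beta> f g))"

end

theory Submission
  imports Defs
begin

lemma Mv_comp:
  fixes P :: "real^'n::finite^'n"
  shows "((mat 1 - \<beta> *\<^sub>R P) *v x) $ i = x$i - \<beta> * (P *v x)$i"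
  by (simp add: matrix_vector_mult_diff_rdistrib, simp add: matrix_vector_mult_def sum_distrib_left mult.assoc)

lemma stoch_le:
  fixes P :: "real^'n::finite^'n" and d :: "real^'n"
  assumes nn: "\<And>i j. 0 \<le> P$i$j" and rs: "\<And>i. (\<Sum>j\<in>UNIV. P$i$j) = 1"
    and b: "0 \<le> \<beta>" "\<beta> < 1" and h: "\<And>i. d$i \<le> \<beta> * (P *v d)$i"
  shows "d$i \<le> 0"
proof -
  define m where "m = Max (range (\<lambda>j. d$j))"
  have mge: "d$j \<le> m" for j unfolding m_def by simp
  have "m \<in> range (\<lambda>j. d$j)" unfolding m_def by (rule Max_in) auto
  then obtain i0 where i0: "d$i0 = m" by auto
  have "(P *v d)$i0 = (\<Sum>j\<in>UNIV. P$i0$j * d$j)" by (simp add: matrix_vector_mult_def)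
  also have "\<dots> \<le> (\<Sum>j\<in>UNIV. P$i0$j * m)"
    by (rule sum_mono) (simp add: mult_left_mono nn mge)
  also have "\<dots> = m" by (simp add: sum_distrib_right[symmetric] rs)
  finally have "\<beta> * (P *v d)$i0 \<le> \<beta> * m" using b by (simp add: mult_left_mono)
  with h[of i0] i0 have "m \<le> \<beta> * m" by simp
  with b have "m \<le> 0" by (smt (verit, best) mult_le_cancel_right1)
  with mge show ?thesis by (meson order_trans)
qed

lemma M_invertible:
  fixes P :: "real^'n::finite^'n"
  assumes nn: "\<And>i j. 0 \<le> P$i$j" and rs: "\<And>i. (\<Sum>j\<in>UNIV. P$i$j) = 1"
    and b: "0 \<le> \<beta>" "\<beta> < 1"
  shows "invertible (mat 1 - \<beta> *\<^sub>R P)"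
  unfolding invertible_left_inverse matrix_left_invertible_ker
proof (intro allI impI)
  fix x :: "real^'n" assume x: "(mat 1 - \<beta> *\<^sub>R P) *v x = 0"
  have e: "x$i = \<beta> * (P *v x)$i" for i using arg_cong[OF x, of "\<lambda>v. v$i"] by (simp add: Mv_comp)
  have "x$i \<le> 0" for i by (rule stoch_le[OF nn rs b], rule eq_refl, rule e)
  have neg: "P *v (-x) = -(P *v x)" by (simp add: matrix_vector_mult_def sum_negf vec_eq_iff)
  have "(-x)$i \<le> 0" for i
  proof (rule stoch_le[OF nn rs b])
    fix i show "(-x)$i \<le> \<beta> * (P *v (-x))$i" unfolding neg using e[of i] by simp
  qed
  moreover note \<open>\<And>i. x$i \<le> 0\<close>
  ultimately show "x = 0" by (simp add: vec_eq_iff order_antisym)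
qed

lemma M_inv_eq:
  fixes M :: "real^'n::finite^'n"
  assumes "invertible M"
  shows "M *v (matrix_inv M *v r) = r"
proof -
  have "M ** matrix_inv M = mat 1" using assms unfolding invertible_def matrix_inv_def
    by (rule someI_ex[where P="\<lambda>A'. M ** A' = mat 1 \<and> A' ** M = mat 1", THEN conjunct1])
  then show ?thesis by (simp add: matrix_vector_mul_assoc)
qed

lemma compare:
  fixes P :: "real^'n::finite^'n"
  assumes nn: "\<And>i j. 0 \<le> P$i$j" and rs: "\<And>i. (\<Sum>j\<in>UNIV. P$i$j) = 1"
    and b: "0 \<le> \<beta>" "\<beta> < 1"
    and x: "(mat 1 - \<beta> *\<^sub>R P) *v x = r"
    and u: "\<And>i. r$i \<le> ((mat 1 - \<beta> *\<^sub>R P) *v u)$i"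
  shows "x$i \<le> u$i"
proof -
  have "(x - u)$i \<le> 0"
  proof (rule stoch_le[OF nn rs b])
    fix i
    have "x$i - \<beta> * (P *v x)$i \<le> u$i - \<beta> * (P *v u)$i"
      using u[of i] arg_cong[OF x, of "\<lambda>v. v$i"] by (simp add: Mv_comp)
    then show "(x - u)$i \<le> \<beta> * (P *v (x - u))$i"
      by (simp add: matrix_vector_mult_diff_distrib right_diff_distrib)
  qed
  then show ?thesis by simp
qed

lemma sum_pure:
  assumes "finite A" "x \<in> A" "pmf q x = 1"
  shows "(\<Sum>y\<in>A. pmf q y * h y) = h x"
proof -
  have z: "pmf q y = 0" if "y \<noteq> x" for y
  proof -
    have "measure_pmf.prob q {x, y} = pmf q x + pmf q y"
      using that by (simp add: measure_measure_pmf_finite)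
    moreover have "measure_pmf.prob q {x, y} \<le> 1" by simp
    ultimately show ?thesis using assms(3) pmf_nonneg[of q y] by linarith
  qed
  have "(\<Sum>y\<in>A. pmf q y * h y) = (\<Sum>y\<in>A. if y = x then h x else 0)"
    by (rule sum.cong) (auto simp: z assms(3))
  also have "\<dots> = h x" using assms by simp
  finally show ?thesis .
qed

lemma tm_nn:
  assumes "stochastic_game A1 A2 p" "stationary A1 f" "stationary A2 g"
  shows "0 \<le> trans_mat A1 A2 p f g $ i $ j"
  using assms unfolding trans_mat_def stochastic_game_def
  by (auto intro!: sum_nonneg mult_nonneg_nonneg)

lemma tm_rs:
  assumes game: "stochastic_game A1 A2 p" and f: "stationary A1 f" and g: "stationary A2 g"
  shows "(\<Sum>j\<in>UNIV. trans_mat A1 A2 p f g $ i $ j) = 1"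
proof -
  have fin: "finite (A1 i)" "finite (A2 i)" using game by (auto simp: stochastic_game_def)
  have "(\<Sum>j\<in>UNIV. trans_mat A1 A2 p f g $ i $ j)
      = (\<Sum>a1\<in>A1 i. \<Sum>a2\<in>A2 i. pmf (f i) a1 * pmf (g i) a2 * (\<Sum>j\<in>UNIV. p i a1 a2 j))"
    unfolding trans_mat_def by (simp add: sum_distrib_left sum.swap[of _ UNIV])
  also have "\<dots> = (\<Sum>a1\<in>A1 i. \<Sum>a2\<in>A2 i. pmf (f i) a1 * pmf (g i) a2)"
    using game by (auto simp: stochastic_game_def intro!: sum.cong)
  also have "\<dots> = (\<Sum>a1\<in>A1 i. pmf (f i) a1) * (\<Sum>a2\<in>A2 i. pmf (g i) a2)"
    by (simp add: sum_product)
  also have "\<dots> = 1" using f g fin by (simp add: stationary_def sum_pmf_eq_1)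
  finally show ?thesis .
qed

lemma dp_eq:
  assumes game: "stochastic_game A1 A2 p" and f: "stationary A1 f" and g: "stationary A2 g"
    and b: "0 \<le> \<beta>" "\<beta> < 1"
  shows "(mat 1 - \<beta> *\<^sub>R trans_mat A1 A2 p f g) *v disc_payoff A1 A2 p r \<beta> f g = rew_vec A1 A2 r f g"
  unfolding disc_payoff_def
  by (rule M_inv_eq, rule M_invertible[OF tm_nn[OF game f g] tm_rs[OF game f g] b])

lemma dp_le:
  assumes game: "stochastic_game A1 A2 p" and f: "stationary A1 f" and g: "stationary A2 g"
    and b: "0 \<le> \<beta>" "\<beta> < 1"
    and u: "\<And>i. rew_vec A1 A2 r f g $ i \<le> u$i - \<beta> * (trans_mat A1 A2 p f g *v u)$i"
  shows "disc_payoff A1 A2 p r \<beta> f g $ i \<le> u$i"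
  by (rule compare[OF tm_nn[OF game f g] tm_rs[OF game f g] b dp_eq[OF game f g b]])
     (simp add: Mv_comp u)

context
  fixes A1 :: "'s::finite \<Rightarrow> 'a set" and A2 :: "'s \<Rightarrow> 'b set"
    and p :: "'s \<Rightarrow> 'a \<Rightarrow> 'b \<Rightarrow> 's \<Rightarrow> real"
    and r1 :: "'s \<Rightarrow> 'a \<Rightarrow> 'b \<Rightarrow> real"
    and fs :: "'s \<Rightarrow> 'a pmf" and gs :: "'s \<Rightarrow> 'b pmf"
    and a1s :: "'s \<Rightarrow> 'a" and a2s :: "'s \<Rightarrow> 'b"
  assumes game: "stochastic_game A1 A2 p"
    and st1: "stationary A1 fs" and st2: "stationary A2 gs"
    and D1: "\<forall>s. a1s s \<in> A1 s \<and> a2s s \<in> A2 s \<and> pmf (fs s) (a1s s) = 1 \<and> pmf (gs s) (a2s s) = 1"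
    and D2: "trans_mat A1 A2 p fs gs = mat 1"
begin

lemma fin1: "finite (A1 s)" and fin2: "finite (A2 s)"
  using game by (auto simp: stochastic_game_def)

lemma pure_g: "(\<Sum>a2\<in>A2 s. pmf (gs s) a2 * h a2) = h (a2s s)"
  by (rule sum_pure[OF fin2]) (use D1 in auto)

lemma pure_f: "(\<Sum>a1\<in>A1 s. pmf (fs s) a1 * h a1) = h (a1s s)"
  by (rule sum_pure[OF fin1]) (use D1 in auto)

lemma rew_g: "rew_vec A1 A2 r1 f' gs $ s = (\<Sum>a\<in>A1 s. pmf (f' s) a * r1 s a (a2s s))"
proof -
  have "rew_vec A1 A2 r1 f' gs $ s = (\<Sum>a\<in>A1 s. pmf (f' s) a * (\<Sum>a2\<in>A2 s. pmf (gs s) a2 * r1 s a a2))"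
    unfolding rew_vec_def by (simp add: sum_distrib_left mult.assoc)
  also have "\<dots> = (\<Sum>a\<in>A1 s. pmf (f' s) a * r1 s a (a2s s))"
    by (simp add: pure_g)
  finally show ?thesis .
qed

lemma tm_g: "trans_mat A1 A2 p f' gs $ s $ j = (\<Sum>a\<in>A1 s. pmf (f' s) a * p s a (a2s s) j)"
proof -
  have "trans_mat A1 A2 p f' gs $ s $ j = (\<Sum>a\<in>A1 s. pmf (f' s) a * (\<Sum>a2\<in>A2 s. pmf (gs s) a2 * p s a a2 j))"
    unfolding trans_mat_def by (simp add: sum_distrib_left mult.assoc)
  also have "\<dots> = (\<Sum>a\<in>A1 s. pmf (f' s) a * p s a (a2s s) j)"
    by (simp add: pure_g)
  finally show ?thesis .
qed

lemma rew_fg: "rew_vec A1 A2 r1 fs gs $ s = r1 s (a1s s) (a2s s)"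
  unfolding rew_g by (rule pure_f)

lemma v_pure:
  assumes b: "0 \<le> \<beta>" "\<beta> < 1"
  shows "disc_payoff A1 A2 p r1 \<beta> fs gs $ s = r1 s (a1s s) (a2s s) / (1 - \<beta>)"
proof -
  have "((mat 1 - \<beta> *\<^sub>R trans_mat A1 A2 p fs gs) *v disc_payoff A1 A2 p r1 \<beta> fs gs) $ s
        = rew_vec A1 A2 r1 fs gs $ s"
    using dp_eq[OF game st1 st2 b] by simp
  then have "disc_payoff A1 A2 p r1 \<beta> fs gs $ s - \<beta> * disc_payoff A1 A2 p r1 \<beta> fs gs $ s
             = r1 s (a1s s) (a2s s)"
    by (simp add: Mv_comp D2 rew_fg)
  with b show ?thesis by (simp add: field_simps)
qed


lemma stepA:
  assumes bh: "0 \<le> \<beta>h" "\<beta>h < 1"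
    and nash1: "\<And>f'. stationary A1 f' \<Longrightarrow> disc_payoff A1 A2 p r1 \<beta>h f' gs $ s \<le> disc_payoff A1 A2 p r1 \<beta>h fs gs $ s"
    and a: "a \<in> A1 s"
  shows "(1 - \<beta>h) * r1 s a (a2s s) + \<beta>h * (\<Sum>j\<in>UNIV. p s a (a2s s) j * r1 j (a1s j) (a2s j))
         \<le> r1 s (a1s s) (a2s s)"
proof -
  define f'' where "f'' = fs(s := return_pmf a)"
  have st'': "stationary A1 f''" using st1 a by (auto simp: stationary_def f''_def)
  define v where "v = disc_payoff A1 A2 p r1 \<beta>h f'' gs"
  define u where "u t = r1 t (a1s t) (a2s t) / (1 - \<beta>h)" for t
  define q where "q j = p s a (a2s s) j" for j
  have eq: "v$t - \<beta>h * (trans_mat A1 A2 p f'' gs *v v)$t = rew_vec A1 A2 r1 f'' gs $ t" for t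
    using arg_cong[OF dp_eq[OF game st'' st2 bh, of r1], of "\<lambda>x. x$t"] by (simp add: Mv_comp v_def)
  have other: "v$t = u t" if "t \<noteq> s" for t
  proof -
    have "trans_mat A1 A2 p f'' gs $ t = trans_mat A1 A2 p fs gs $ t"
      using that by (simp add: trans_mat_def f''_def)
    hence "(trans_mat A1 A2 p f'' gs *v v)$t = (trans_mat A1 A2 p fs gs *v v)$t"
      by (simp add: matrix_vector_mult_def)
    hence 1: "(trans_mat A1 A2 p f'' gs *v v)$t = v$t" by (simp add: D2)
    have "rew_vec A1 A2 r1 f'' gs $ t = rew_vec A1 A2 r1 fs gs $ t"
      using that by (simp add: rew_vec_def f''_def)
    with eq[of t] 1 rew_fg[of t] have "v$t - \<beta>h * v$t = r1 t (a1s t) (a2s t)" by simp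
    with bh show ?thesis by (simp add: u_def field_simps)
  qed
  have ret: "(\<Sum>a'\<in>A1 s. pmf (f'' s) a' * h a') = h a" for h :: "'a \<Rightarrow> real"
    by (rule sum_pure[OF fin1 a]) (simp add: f''_def)
  have row: "v$s - \<beta>h * (\<Sum>j\<in>UNIV. q j * v$j) = r1 s a (a2s s)"
    using eq[of s] by (simp add: matrix_vector_mult_def tm_g rew_g ret q_def)
  have vs: "v$s \<le> u s" using nash1[OF st''] v_pure[OF bh] by (simp add: u_def v_def)
  have qnn: "0 \<le> q j" for j using game a D1 by (auto simp: stochastic_game_def q_def)
  have qsum: "(\<Sum>j\<in>UNIV. q j) = 1" using game a D1 by (auto simp: stochastic_game_def q_def)
  have qs: "q s \<le> 1" using member_le_sum[of s UNIV q] qnn qsum by simp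
  have "(\<Sum>j\<in>UNIV. q j * (u j - v$j)) = (\<Sum>j\<in>UNIV. if j = s then q s * (u s - v$s) else 0)"
    by (rule sum.cong) (auto simp: other)
  hence diff: "(\<Sum>j\<in>UNIV. q j * u j) - (\<Sum>j\<in>UNIV. q j * v$j) = q s * (u s - v$s)"
    by (simp add: sum_subtractf[symmetric] right_diff_distrib)
  have "\<beta>h * q s \<le> 1" using bh qs qnn[of s] by (simp add: mult_le_one)
  hence "\<beta>h * q s * (u s - v$s) \<le> 1 * (u s - v$s)" using vs by (intro mult_right_mono) auto
  hence key: "r1 s a (a2s s) + \<beta>h * (\<Sum>j\<in>UNIV. q j * u j) \<le> u s"
  proof -
    have "\<beta>h * (\<Sum>j\<in>UNIV. q j * u j) = \<beta>h * (\<Sum>j\<in>UNIV. q j * v$j) + \<beta>h * q s * (u s - v$s)"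
      using diff by (metis add_diff_cancel_left' diff_add_cancel distrib_left mult.assoc)
    then show ?thesis using row \<open>\<beta>h * q s * (u s - v$s) \<le> 1 * (u s - v$s)\<close> by (smt (verit))
  qed
  define S where "S = (\<Sum>j\<in>UNIV. q j * u j)"
  have T: "(1 - \<beta>h) * S = (\<Sum>j\<in>UNIV. p s a (a2s s) j * r1 j (a1s j) (a2s j))"
    using bh by (simp add: S_def sum_distrib_left u_def q_def)
  have U: "(1 - \<beta>h) * u s = r1 s (a1s s) (a2s s)" using bh by (simp add: u_def)
  have "(1 - \<beta>h) * (r1 s a (a2s s) + \<beta>h * S) \<le> (1 - \<beta>h) * u s"
    using key bh by (intro mult_left_mono) (auto simp: S_def)
  moreover have "(1 - \<beta>h) * (r1 s a (a2s s) + \<beta>h * S) = (1 - \<beta>h) * r1 s a (a2s s) + \<beta>h * ((1 - \<beta>h) * S)"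
    by (simp add: algebra_simps)
  ultimately show ?thesis unfolding T U by linarith
qed


lemma player1:
  assumes bh: "0 \<le> \<beta>h" "\<beta>h \<le> \<beta>" "\<beta> < 1"
    and nash1: "\<And>f' s. stationary A1 f' \<Longrightarrow> disc_payoff A1 A2 p r1 \<beta>h f' gs $ s \<le> disc_payoff A1 A2 p r1 \<beta>h fs gs $ s"
    and D3a: "\<forall>s. \<forall>a1\<in>A1 s. r1 s a1 (a2s s) \<ge> (\<Sum>s'\<in>UNIV. p s a1 (a2s s) s' * r1 s' (a1s s') (a2s s'))"
    and st: "stationary A1 f'"
  shows "disc_payoff A1 A2 p r1 \<beta> f' gs $ s \<le> disc_payoff A1 A2 p r1 \<beta> fs gs $ s"
proof -
  have b: "0 \<le> \<beta>" "\<beta> < 1" using bh by auto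
  have bh1: "0 \<le> \<beta>h" "\<beta>h < 1" using bh by auto
  define R where "R t = r1 t (a1s t) (a2s t)" for t
  define u :: "real^'s" where "u = (\<chi> t. R t / (1 - \<beta>))"
  have vp: "disc_payoff A1 A2 p r1 \<beta> fs gs = u"
    by (simp add: vec_eq_iff u_def R_def v_pure[OF b])
  have B: "(1 - \<beta>) * r1 t a (a2s t) + \<beta> * (\<Sum>j\<in>UNIV. p t a (a2s t) j * R j) \<le> R t"
    if a: "a \<in> A1 t" for t a
  proof -
    define x where "x = r1 t a (a2s t)"
    define y where "y = (\<Sum>j\<in>UNIV. p t a (a2s t) j * R j)"
    have A: "(1 - \<beta>h) * x + \<beta>h * y \<le> R t"
      using stepA[OF bh1 nash1 a] by (simp add: x_def y_def R_def)
    have "y \<le> x" using D3a a by (simp add: x_def y_def R_def)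
    hence "(\<beta> - \<beta>h) * (x - y) \<ge> 0" using bh by simp
    hence "(1 - \<beta>) * x + \<beta> * y \<le> (1 - \<beta>h) * x + \<beta>h * y" by (simp add: algebra_simps)
    with A show ?thesis by (simp add: x_def y_def)
  qed
  have C: "rew_vec A1 A2 r1 f' gs $ t \<le> u$t - \<beta> * (trans_mat A1 A2 p f' gs *v u)$t" for t
  proof -
    define w where "w a = pmf (f' t) a" for a
    define W where "W = (\<Sum>j\<in>UNIV. trans_mat A1 A2 p f' gs $ t $ j * R j)"
    have Pu: "(trans_mat A1 A2 p f' gs *v u)$t = W / (1 - \<beta>)"
      by (simp add: matrix_vector_mult_def u_def W_def sum_divide_distrib)
    have W: "W = (\<Sum>a\<in>A1 t. w a * (\<Sum>j\<in>UNIV. p t a (a2s t) j * R j))"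
      unfolding W_def tm_g w_def
      by (simp add: sum_distrib_right sum_distrib_left sum.swap[of _ UNIV] mult.assoc)
    have rw: "rew_vec A1 A2 r1 f' gs $ t = (\<Sum>a\<in>A1 t. w a * r1 t a (a2s t))"
      by (simp add: rew_g w_def)
    have "(1 - \<beta>) * rew_vec A1 A2 r1 f' gs $ t + \<beta> * W
        = (\<Sum>a\<in>A1 t. w a * ((1 - \<beta>) * r1 t a (a2s t) + \<beta> * (\<Sum>j\<in>UNIV. p t a (a2s t) j * R j)))"
      unfolding rw W
    proof -
      have "(1 - \<beta>) * (\<Sum>a\<in>A1 t. w a * r1 t a (a2s t)) + \<beta> * (\<Sum>a\<in>A1 t. w a * (\<Sum>j\<in>UNIV. p t a (a2s t) j * R j))
          = (\<Sum>a\<in>A1 t. (1 - \<beta>) * (w a * r1 t a (a2s t)) + \<beta> * (w a * (\<Sum>j\<in>UNIV. p t a (a2s t) j * R j)))"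
        by (simp only: sum.distrib sum_distrib_left)
      also have "\<dots> = (\<Sum>a\<in>A1 t. w a * ((1 - \<beta>) * r1 t a (a2s t) + \<beta> * (\<Sum>j\<in>UNIV. p t a (a2s t) j * R j)))"
        by (rule sum.cong) (simp_all add: algebra_simps)
      finally show "(1 - \<beta>) * (\<Sum>a\<in>A1 t. w a * r1 t a (a2s t)) + \<beta> * (\<Sum>a\<in>A1 t. w a * (\<Sum>j\<in>UNIV. p t a (a2s t) j * R j))
          = (\<Sum>a\<in>A1 t. w a * ((1 - \<beta>) * r1 t a (a2s t) + \<beta> * (\<Sum>j\<in>UNIV. p t a (a2s t) j * R j)))" .
    qed
    also have "\<dots> \<le> (\<Sum>a\<in>A1 t. w a * R t)"
      by (rule sum_mono) (auto intro!: mult_left_mono B simp: w_def)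
    also have "\<dots> = R t"
      using st fin1[of t] by (simp add: sum_distrib_right[symmetric] w_def stationary_def sum_pmf_eq_1)
    finally have "(1 - \<beta>) * rew_vec A1 A2 r1 f' gs $ t \<le> R t - \<beta> * W" by simp
    hence "rew_vec A1 A2 r1 f' gs $ t \<le> (R t - \<beta> * W) / (1 - \<beta>)"
      using b by (simp add: pos_le_divide_eq mult.commute)
    then show ?thesis using b unfolding Pu by (simp add: u_def diff_divide_distrib)
  qed
  show ?thesis unfolding vp by (rule dp_le[OF game st st2 b C])
qed

end


lemma tm_swap: "trans_mat A2 A1 (\<lambda>s b a. p s a b) g f = trans_mat A1 A2 p f g"
proof -
  have "(\<Sum>b\<in>A2 s. \<Sum>a\<in>A1 s. pmf (g s) b * pmf (f s) a * p s a b t)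
      = (\<Sum>a\<in>A1 s. \<Sum>b\<in>A2 s. pmf (f s) a * pmf (g s) b * p s a b t)" for s t
    by (subst sum.swap) (simp add: mult.commute)
  then show ?thesis unfolding trans_mat_def by (simp add: vec_eq_iff)
qed

lemma rew_swap: "rew_vec A2 A1 (\<lambda>s b a. r s a b) g f = rew_vec A1 A2 r f g"
proof -
  have "(\<Sum>b\<in>A2 s. \<Sum>a\<in>A1 s. pmf (g s) b * pmf (f s) a * r s a b)
      = (\<Sum>a\<in>A1 s. \<Sum>b\<in>A2 s. pmf (f s) a * pmf (g s) b * r s a b)" for s
    by (subst sum.swap) (simp add: mult.commute)
  then show ?thesis unfolding rew_vec_def by (simp add: vec_eq_iff)
qed

lemma dp_swap: "disc_payoff A2 A1 (\<lambda>s b a. p s a b) (\<lambda>s b a. r s a b) \<beta> g f = disc_payoff A1 A2 p r \<beta> f g"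
  by (simp only: disc_payoff_def tm_swap[of A2 A1 p g f] rew_swap[of A2 A1 r g f])

lemma game_swap: "stochastic_game A1 A2 p \<Longrightarrow> stochastic_game A2 A1 (\<lambda>s b a. p s a b)"
  unfolding stochastic_game_def by auto

theorem theorem3:
  fixes A1 :: "'s::finite \<Rightarrow> 'a set" and A2 :: "'s \<Rightarrow> 'b set"
    and p :: "'s \<Rightarrow> 'a \<Rightarrow> 'b \<Rightarrow> 's \<Rightarrow> real"
    and r1 r2 :: "'s \<Rightarrow> 'a \<Rightarrow> 'b \<Rightarrow> real"
    and fs :: "'s \<Rightarrow> 'a pmf" and gs :: "'s \<Rightarrow> 'b pmf"
    and \<beta>h :: real and a1s :: "'s \<Rightarrow> 'a" and a2s :: "'s \<Rightarrow> 'b"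
  assumes game: "stochastic_game A1 A2 p"
    and beta: "0 \<le> \<beta>h" "\<beta>h < 1"
    and nash: "disc_nash A1 A2 p r1 r2 \<beta>h fs gs"
    and D1: "\<forall>s. a1s s \<in> A1 s \<and> a2s s \<in> A2 s \<and> pmf (fs s) (a1s s) = 1 \<and> pmf (gs s) (a2s s) = 1"
    and D2: "trans_mat A1 A2 p fs gs = mat 1"
    and D3a: "\<forall>s. \<forall>a1\<in>A1 s. r1 s a1 (a2s s) \<ge> (\<Sum>s'\<in>UNIV. p s a1 (a2s s) s' * r1 s' (a1s s') (a2s s'))"
    and D3b: "\<forall>s. \<forall>a2\<in>A2 s. r2 s (a1s s) a2 \<ge> (\<Sum>s'\<in>UNIV. p s (a1s s) a2 s' * r2 s' (a1s s') (a2s s'))"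
  shows "blackwell_nash A1 A2 p r1 r2 fs gs"
  unfolding blackwell_nash_def
proof (intro exI[of _ \<beta>h] conjI allI impI beta)
  fix \<beta> assume b: "\<beta>h \<le> \<beta> \<and> \<beta> < 1"
  have st1: "stationary A1 fs" and st2: "stationary A2 gs" using nash by (auto simp: disc_nash_def)
  have n1: "\<And>f' s. stationary A1 f' \<Longrightarrow> disc_payoff A1 A2 p r1 \<beta>h f' gs $ s \<le> disc_payoff A1 A2 p r1 \<beta>h fs gs $ s"
    using nash by (auto simp: disc_nash_def)
  have n2: "\<And>g' s. stationary A2 g' \<Longrightarrow> disc_payoff A2 A1 (\<lambda>s b a. p s a b) (\<lambda>s b a. r2 s a b) \<beta>h g' fs $ s
      \<le> disc_payoff A2 A1 (\<lambda>s b a. p s a b) (\<lambda>s b a. r2 s a b) \<beta>h gs fs $ s"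
  proof -
    fix g' s assume "stationary A2 g'"
    then have "disc_payoff A1 A2 p r2 \<beta>h fs g' $ s \<le> disc_payoff A1 A2 p r2 \<beta>h fs gs $ s"
      using nash by (auto simp: disc_nash_def)
    then show "disc_payoff A2 A1 (\<lambda>s b a. p s a b) (\<lambda>s b a. r2 s a b) \<beta>h g' fs $ s
      \<le> disc_payoff A2 A1 (\<lambda>s b a. p s a b) (\<lambda>s b a. r2 s a b) \<beta>h gs fs $ s"
      by (simp only: dp_swap[of A2 A1 p r2 \<beta>h g' fs] dp_swap[of A2 A1 p r2 \<beta>h gs fs])
  qed
  have bb: "0 \<le> \<beta>h" "\<beta>h \<le> \<beta>" "\<beta> < 1" using b beta by auto
  have P1: "disc_payoff A1 A2 p r1 \<beta> f' gs $ s \<le> disc_payoff A1 A2 p r1 \<beta> fs gs $ s"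
    if "stationary A1 f'" for f' s
    by (rule player1[OF game st1 st2 D1 D2 bb n1 D3a that])
  have D1': "\<forall>s. a2s s \<in> A2 s \<and> a1s s \<in> A1 s \<and> pmf (gs s) (a2s s) = 1 \<and> pmf (fs s) (a1s s) = 1"
    using D1 by auto
  have D2': "trans_mat A2 A1 (\<lambda>s b a. p s a b) gs fs = mat 1" by (simp only: tm_swap[of A2 A1 p gs fs] D2)
  have D3': "\<forall>s. \<forall>a2\<in>A2 s. (\<lambda>s b a. r2 s a b) s a2 (a1s s) \<ge>
      (\<Sum>s'\<in>UNIV. (\<lambda>s b a. p s a b) s a2 (a1s s) s' * (\<lambda>s b a. r2 s a b) s' (a2s s') (a1s s'))"
    using D3b by simp
  have P2: "disc_payoff A1 A2 p r2 \<beta> fs g' $ s \<le> disc_payoff A1 A2 p r2 \<beta> fs gs $ s"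
    if "stationary A2 g'" for g' s
    using player1[OF game_swap[OF game] st2 st1 D1' D2' bb n2 D3' that]
    by (simp only: dp_swap[of A2 A1 p r2 \<beta> g' fs] dp_swap[of A2 A1 p r2 \<beta> gs fs])
  show "disc_nash A1 A2 p r1 r2 \<beta> fs gs"
    unfolding disc_nash_def using st1 st2 P1 P2 by blast
qed

end
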